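(* Let $K_0$ be a finite extension of $\mathbb{Q}_2$ with absolute ramification index $e_0$, and let $K_2/K_0$ be a totally ramified cyclic extension of degree $4$ with Galois group generated by $\sigma$, with intermediate field $K_1$ (the fixed field of $\sigma^2$), whose lower ramification break numbers $b_1<b_2$ are odd with $b_1>e_0$ and $b_2=b_1+2e_0$. Then for every odd integer $a$ there are $\alpha,\rho\in K_2$ with $v_2(\alpha)=a$, $v_2(\rho)=a+(b_2-b_1)$ such that $\mu:=(\sigma+1)\alpha-\rho$ lies in $K_1$ and $v_2(\mu)=a+b_1$. Furthermore, if $a+b_1\equiv 0\pmod 4$, then $\alpha,\rho$ can be chosen so that in addition $\mu\in K_0$.
   Context: $v_2$ is the normalized valuation of $K_2$. The lower ramification break numbers of $\mathrm{Gal}(K_2/K_0)$ are the integers $j\ge1$ with $G_j\ne G_{j+1}$ in the lower-numbering ramification filtration. $(\sigma+1)\alpha=\sigma(\alpha)+\alpha$. *)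

theory Defs
  imports Main
begin

text \<open>Valuations are functions 'k => int; only their values on nonzero elements matter
  (the value 0 plays the role of +infinity and is never consulted).\<close>

definition normalized_discrete_valuation :: "('k::field \<Rightarrow> int) \<Rightarrow> bool" where
  "normalized_discrete_valuation v \<longleftrightarrow>
     (\<forall>x y. x \<noteq> 0 \<longrightarrow> y \<noteq> 0 \<longrightarrow> v (x * y) = v x + v y) \<and>
     (\<forall>x y. x \<noteq> 0 \<longrightarrow> y \<noteq> 0 \<longrightarrow> x + y \<noteq> 0 \<longrightarrow> min (v x) (v y) \<le> v (x + y)) \<and>
     (\<exists>x. x \<noteq> 0 \<and> v x = 1)"

definition val_ring :: "('k::field \<Rightarrow> int) \<Rightarrow> 'k set" where
  "val_ring v = {x. x = 0 \<or> 0 \<le> v x}"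

definition val_ideal :: "('k::field \<Rightarrow> int) \<Rightarrow> 'k set" where
  "val_ideal v = {x. x = 0 \<or> 1 \<le> v x}"

definition residue_field :: "('k::field \<Rightarrow> int) \<Rightarrow> 'k set set" where
  "residue_field v = val_ring v // {(x, y). x \<in> val_ring v \<and> y \<in> val_ring v \<and> x - y \<in> val_ideal v}"

definition val_complete :: "('k::field \<Rightarrow> int) \<Rightarrow> bool" where
  "val_complete v \<longleftrightarrow>
     (\<forall>s :: nat \<Rightarrow> 'k.
        (\<forall>N::int. \<exists>M. \<forall>m\<ge>M. \<forall>n\<ge>M. s m = s n \<or> N \<le> v (s m - s n)) \<longrightarrow>
        (\<exists>L. \<forall>N::int. \<exists>M. \<forall>n\<ge>M. s n = L \<or> N \<le> v (s n - L)))"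

text \<open>A field of characteristic 0, complete for a discrete valuation with finite residue
  field of characteristic 2: exactly the finite extensions of Q_2 (with v their normalized valuation).\<close>
definition two_adic_local_field :: "('k::field_char_0 \<Rightarrow> int) \<Rightarrow> bool" where
  "two_adic_local_field v \<longleftrightarrow>
     normalized_discrete_valuation v \<and> val_complete v \<and>
     finite (residue_field v) \<and> (2::'k) \<in> val_ideal v"

definition field_automorphism :: "('k::field \<Rightarrow> 'k) \<Rightarrow> bool" where
  "field_automorphism s \<longleftrightarrow> bij s \<and> (\<forall>x y. s (x + y) = s x + s y) \<and> (\<forall>x y. s (x * y) = s x * s y)"

definition cyc_group :: "('k \<Rightarrow> 'k) \<Rightarrow> ('k \<Rightarrow> 'k) set" where
  "cyc_group s = {s ^^ k | k. k < (4::nat)}"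

definition lower_ram_group :: "('k::field \<Rightarrow> int) \<Rightarrow> ('k \<Rightarrow> 'k) \<Rightarrow> int \<Rightarrow> ('k \<Rightarrow> 'k) set" where
  "lower_ram_group v s i = {g \<in> cyc_group s. \<forall>x \<in> val_ring v. g x - x = 0 \<or> i + 1 \<le> v (g x - x)}"

definition lower_breaks :: "('k::field \<Rightarrow> int) \<Rightarrow> ('k \<Rightarrow> 'k) \<Rightarrow> int set" where
  "lower_breaks v s = {j. 1 \<le> j \<and> lower_ram_group v s j \<noteq> lower_ram_group v s (j + 1)}"

end

theory Submission
  imports Defs
begin

definition gev :: "('k::field \<Rightarrow> int) \<Rightarrow> 'k \<Rightarrow> int \<Rightarrow> bool" where
  "gev v x n \<longleftrightarrow> x = 0 \<or> n \<le> v x"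

locale vfield =
  fixes v :: "'k::field_char_0 \<Rightarrow> int"
  assumes vmult: "x \<noteq> 0 \<Longrightarrow> y \<noteq> 0 \<Longrightarrow> v (x * y) = v x + v y"
    and vadd: "x \<noteq> 0 \<Longrightarrow> y \<noteq> 0 \<Longrightarrow> x + y \<noteq> 0 \<Longrightarrow> min (v x) (v y) \<le> v (x + y)"
begin

abbreviation ge :: "'k \<Rightarrow> int \<Rightarrow> bool" where "ge x n \<equiv> gev v x n"

lemma v_one[simp]: "v 1 = 0"
  using vmult[of 1 1] by simp

lemma v_inverse: "x \<noteq> 0 \<Longrightarrow> v (inverse x) = - v x"
  using vmult[of x "inverse x"] by simp

lemma v_divide: "x \<noteq> 0 \<Longrightarrow> y \<noteq> 0 \<Longrightarrow> v (x / y) = v x - v y"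
  by (simp add: divide_inverse vmult v_inverse)

lemma v_m1[simp]: "v (-1) = 0"
  using vmult[of "-1" "-1"] by simp

lemma v_minus[simp]: "v (- x) = v x"
proof (cases "x = 0")
  case False
  then show ?thesis using vmult[of "-1" x] by simp
qed simp

lemma v_power: "x \<noteq> 0 \<Longrightarrow> v (x ^ n) = int n * v x"
  by (induction n) (auto simp: vmult algebra_simps)

lemma ge_0[simp]: "ge 0 n" by (simp add: gev_def)

lemma ge_mono: "ge x m \<Longrightarrow> n \<le> m \<Longrightarrow> ge x n"
  by (auto simp: gev_def)

lemma ge_v: "x \<noteq> 0 \<Longrightarrow> ge x n \<longleftrightarrow> n \<le> v x"
  by (simp add: gev_def)

lemma ge_self: "ge x (v x)" by (simp add: gev_def)

lemma ge_minus[simp]: "ge (- x) n \<longleftrightarrow> ge x n"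
  by (simp add: gev_def)

lemma ge_add: "ge x n \<Longrightarrow> ge y n \<Longrightarrow> ge (x + y) n"
  unfolding gev_def using vadd[of x y] by fastforce

lemma ge_diff: "ge x n \<Longrightarrow> ge y n \<Longrightarrow> ge (x - y) n"
  using ge_add[of x n "- y"] by simp

lemma ge_mult: "ge x n \<Longrightarrow> ge y m \<Longrightarrow> ge (x * y) (n + m)"
  unfolding gev_def by (cases "x = 0"; cases "y = 0") (auto simp: vmult)

lemma ge_mult_v: "ge x n \<Longrightarrow> y \<noteq> 0 \<Longrightarrow> ge (x * y) (n + v y)"
  using ge_mult[of x n y "v y"] ge_self by blast

lemma ge_div_v: "ge x n \<Longrightarrow> y \<noteq> 0 \<Longrightarrow> ge (x / y) (n - v y)"
  using ge_mult_v[of x n "inverse y"] by (simp add: divide_inverse v_inverse)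

lemma ge_sum: "(\<And>i. i \<in> A \<Longrightarrow> ge (f i) n) \<Longrightarrow> ge (sum f A) n"
  by (induction A rule: infinite_finite_induct) (auto intro: ge_add)

lemma ge_power: "ge x n \<Longrightarrow> ge (x ^ k) (int k * n)"
proof (induction k)
  case 0 then show ?case by (simp add: gev_def)
next
  case (Suc k)
  then show ?case using ge_mult[of x n "x^k" "int k * n"] by (simp add: algebra_simps)
qed

lemma v_add_dom:
  assumes "x \<noteq> 0" "ge y (v x + 1)"
  shows "x + y \<noteq> 0 \<and> v (x + y) = v x"
proof -
  have ne: "x + y \<noteq> 0"
  proof
    assume "x + y = 0" then have "y = - x" by (simp add: add_eq_0_iff2)
    with assms show False by (simp add: gev_def)
  qed
  have "ge (x + y) (v x)" using assms ge_add[of x "v x" y] ge_self ge_mono by fastforce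
  moreover have "\<not> ge (x + y) (v x + 1)"
  proof
    assume "ge (x + y) (v x + 1)"
    then have "ge ((x + y) - y) (v x + 1)" using ge_diff assms by blast
    then show False using assms by (simp add: gev_def)
  qed
  ultimately show ?thesis using ne by (simp add: gev_def)
qed

lemma v_add_dom': "x \<noteq> 0 \<Longrightarrow> v x = n \<Longrightarrow> ge y (n + 1) \<Longrightarrow> x + y \<noteq> 0 \<and> v (x + y) = n"
  using v_add_dom by blast

lemma ge_pos_unit: "ge w 1 \<Longrightarrow> 1 + w \<noteq> 0 \<and> v (1 + w) = 0"
  using v_add_dom[of 1 w] by simp

end

locale setting = vfield v for v :: "'k::field_char_0 \<Rightarrow> int" +
  fixes \<sigma> :: "'k \<Rightarrow> 'k" and \<pi> :: 'k and b1 b2 e0 :: int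
  assumes sadd: "\<sigma> (x + y) = \<sigma> x + \<sigma> y"
    and smult: "\<sigma> (x * y) = \<sigma> x * \<sigma> y"
    and sinj: "inj \<sigma>"
    and s4: "\<sigma> (\<sigma> (\<sigma> (\<sigma> x))) = x"
    and vs: "x \<noteq> 0 \<Longrightarrow> v (\<sigma> x) = v x"
    and fixv: "x \<noteq> 0 \<Longrightarrow> \<sigma> x = x \<Longrightarrow> 4 dvd v x"
    and fixex: "\<exists>c. c \<noteq> 0 \<and> \<sigma> c = c \<and> v c = 4 * k"
    and pi_nz: "\<pi> \<noteq> 0" and v_pi: "v \<pi> = 1"
    and fin: "finite (residue_field v)"
    and two: "v 2 = 4 * e0" and two1: "ge 2 1"
    and R1: "ge x 0 \<Longrightarrow> ge (\<sigma> x - x) (b1 + 1)"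
    and nR1: "\<not> (\<forall>x. ge x 0 \<longrightarrow> ge (\<sigma> x - x) (b1 + 2))"
    and R2: "ge x 0 \<Longrightarrow> ge (\<sigma> (\<sigma> x) - x) (b2 + 1)"
    and nR2: "\<not> (\<forall>x. ge x 0 \<longrightarrow> ge (\<sigma> (\<sigma> x) - x) (b2 + 2))"
    and b1odd: "odd b1" and e0b1: "e0 < b1" and b2def: "b2 = b1 + 2 * e0" and b1pos: "1 \<le> b1"
begin

lemma s0[simp]: "\<sigma> 0 = 0"
  using sadd[of 0 0] by simp

lemma sminus[simp]: "\<sigma> (- x) = - \<sigma> x"
  using sadd[of x "- x"] by (metis add.right_inverse s0 minus_unique)

lemma sdiff[simp]: "\<sigma> (x - y) = \<sigma> x - \<sigma> y"
  using sadd[of x "- y"] by simp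

lemma seq0[simp]: "\<sigma> x = 0 \<longleftrightarrow> x = 0"
  using sinj s0 by (metis injD)

lemma s1[simp]: "\<sigma> 1 = 1"
proof -
  have "\<sigma> 1 = \<sigma> 1 * \<sigma> 1" using smult[of 1 1] by simp
  moreover have "\<sigma> 1 \<noteq> 0" by simp
  ultimately show ?thesis by (metis mult_cancel_left1)
qed

lemma sinv[simp]: "\<sigma> (inverse x) = inverse (\<sigma> x)"
proof (cases "x = 0")
  case False
  have "\<sigma> x * \<sigma> (inverse x) = 1" using smult[of x "inverse x"] False by simp
  then show ?thesis by (metis inverse_unique)
qed simp

lemma sdiv[simp]: "\<sigma> (x / y) = \<sigma> x / \<sigma> y"
  by (simp add: divide_inverse smult)

lemma smult'[simp]: "\<sigma> (x * y) = \<sigma> x * \<sigma> y" by (rule smult)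
lemma sadd'[simp]: "\<sigma> (x + y) = \<sigma> x + \<sigma> y" by (rule sadd)

lemma sofnat[simp]: "\<sigma> (of_nat n) = of_nat n"
  by (induction n) auto

lemma snum[simp]: "\<sigma> (numeral n) = numeral n"
  using sofnat[of "numeral n"] by simp

lemma spow[simp]: "\<sigma> (x ^ n) = \<sigma> x ^ n"
  by (induction n) auto

lemma s4'[simp]: "\<sigma> (\<sigma> (\<sigma> (\<sigma> x))) = x" by (rule s4)

lemma ge_s[simp]: "ge (\<sigma> x) n \<longleftrightarrow> ge x n"
  by (cases "x = 0") (auto simp: gev_def vs)

lemma e0pos: "1 \<le> e0"
  using two two1 by (simp add: gev_def)

lemma v_two: "(2::'k) \<noteq> 0" by simp

lemma ge_two: "ge 2 (4 * e0)" using two by (simp add: gev_def)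

lemma ge_2mult: "ge x n \<Longrightarrow> ge (2 * x) (n + 4 * e0)"
  using ge_mult[OF ge_two] by (simp add: add.commute)

lemma v_2mult: "x \<noteq> 0 \<Longrightarrow> v (2 * x) = v x + 4 * e0"
  using vmult[of 2 x] two by simp

lemma R1': "ge x 0 \<Longrightarrow> ge (\<sigma> x - x) 1"
  using R1 b1pos ge_mono by fastforce

lemma R1s: "ge x 0 \<Longrightarrow> ge (\<sigma> (\<sigma> x) - x) 1"
proof -
  assume "ge x 0"
  moreover have "\<sigma> (\<sigma> x) - x = \<sigma> (\<sigma> x - x) + (\<sigma> x - x)" by simp
  ultimately show ?thesis using R1' ge_add by (metis ge_s)
qed

lemma R1ss: "ge x 0 \<Longrightarrow> ge (\<sigma> (\<sigma> (\<sigma> x)) - x) 1"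
proof -
  assume "ge x 0"
  moreover have "\<sigma> (\<sigma> (\<sigma> x)) - x = \<sigma> (\<sigma> (\<sigma> x) - x) + (\<sigma> x - x)" by simp
  ultimately show ?thesis using R1' R1s ge_add by (metis ge_s)
qed

subsection \<open>Residue field\<close>

lemma sqcancel:
  assumes "ge x 0" "ge y 0" "ge (x^2 - y^2) 1"
  shows "ge (x - y) 1"
proof -
  have eq: "(x - y)^2 = (x^2 - y^2) - 2 * (y * (x - y))" by (simp add: power2_eq_square algebra_simps)
  have "ge (y * (x - y)) 0" using ge_mult[OF assms(2) ge_diff[OF assms(1) assms(2)]] by simp
  then have "ge (2 * (y * (x - y))) 1" using ge_mult[OF two1] by fastforce
  then have "ge ((x - y)^2) 1" using eq ge_diff assms(3) by metis
  then show ?thesis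
    by (cases "x - y = 0") (auto simp: gev_def v_power)
qed

lemma pow2cancel:
  "ge x 0 \<Longrightarrow> ge y 0 \<Longrightarrow> ge (x^(2^m) - y^(2^m)) 1 \<Longrightarrow> ge (x - y) 1"
proof (induction m arbitrary: x y)
  case 0 then show ?case by simp
next
  case (Suc m)
  have e: "x^(2^Suc m) = (x^2)^(2^m)" "y^(2^Suc m) = (y^2)^(2^m)"
    by (simp_all only: power_Suc power_mult)
  have "ge (x^2) 0" "ge (y^2) 0" using ge_power[of x 0 2] ge_power[of y 0 2] Suc.prems by auto
  moreover have "ge ((x^2)^(2^m) - (y^2)^(2^m)) 1" using Suc.prems(3) e by simp
  ultimately have "ge (x^2 - y^2) 1" using Suc.IH by blast
  then show ?case using sqcancel Suc.prems by blast
qed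

lemma powcong:
  assumes "ge x 0" "ge y 0" "ge (x - y) 1"
  shows "ge (x^N - y^N) 1"
proof -
  have "ge (y ^ (N - Suc i) * x ^ i) 0" for i
    using ge_mult[OF ge_power[OF assms(2), of "N - Suc i"] ge_power[OF assms(1), of i]] by simp
  then have "ge (\<Sum>i<N. y ^ (N - Suc i) * x ^ i) 0"
    by (intro ge_sum) 
  then show ?thesis
    unfolding power_diff_sumr2 using ge_mult[OF assms(3)] by fastforce
qed

lemma pigeon:
  assumes "ge u 0"
  shows "\<exists>m n. m < n \<and> ge (u^(2^m) - u^(2^n)) 1"
proof -
  define rel where "rel = {(x, y). x \<in> val_ring v \<and> y \<in> val_ring v \<and> x - y \<in> val_ideal v}"
  define f where "f n = rel `` {u^(2^n)}" for n :: nat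
  have uR: "u^(2^n) \<in> val_ring v" for n
    using ge_power[OF assms, of "2^n"] by (simp add: val_ring_def gev_def)
  have "range f \<subseteq> residue_field v"
    unfolding residue_field_def f_def rel_def[symmetric] using uR by (auto intro: quotientI)
  then have "finite (range f)" using fin finite_subset by blast
  then have "\<not> inj f" using finite_imageD infinite_UNIV_nat by blast
  then obtain m n where mn: "m \<noteq> n" "f m = f n" unfolding inj_def by blast
  have key: "f m = f n \<Longrightarrow> ge (u^(2^m) - u^(2^n)) 1" for m n
  proof -
    assume "f m = f n"
    moreover have "u^(2^n) \<in> f n" using uR unfolding f_def rel_def val_ideal_def by simp
    ultimately have "(u^(2^m), u^(2^n)) \<in> rel" unfolding f_def by (metis Image_singleton_iff)
    then show ?thesis unfolding rel_def val_ideal_def gev_def by simp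
  qed
  show ?thesis
  proof (cases "m < n")
    case True then show ?thesis using key mn by blast
  next
    case False then have "n < m" using mn by simp
    then show ?thesis using key mn by metis
  qed
qed

lemma froot:
  assumes "ge u 0"
  shows "\<exists>w. ge w 0 \<and> ge (w^4 - u) 1"
proof -
  obtain m n where mn: "m < n" "ge (u^(2^m) - u^(2^n)) 1" using pigeon[OF assms] by blast
  define k where "k = n - m"
  have k1: "1 \<le> k" using mn k_def by simp
  have pw: "ge (u^N) 0" for N using ge_power[OF assms] by fastforce
  have "u^(2^n) = (u^(2^k))^(2^m)"
    by (simp add: k_def power_mult[symmetric] power_add[symmetric] mn(1) less_imp_le)
  then have c1: "ge (u - u^(2^k)) 1" using pow2cancel[OF assms pw] mn(2) by simp
  have "ge ((u^(2^k))^(2^k) - u^(2^k)) 1"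
    using powcong[OF pw assms, of "2^k" "2^k"] c1 by (metis ge_minus minus_diff_eq)
  moreover have "(u^(2^k))^(2^k) = u^(2^(2*k))"
    by (simp add: power_mult[symmetric] power_add[symmetric] mult_2)
  moreover have "ge (u^(2^k) - u) 1" using c1 by (metis ge_minus minus_diff_eq)
  ultimately have c2: "ge (u^(2^(2*k)) - u) 1" using ge_add[of "(u^(2^k))^(2^k) - u^(2^k)" 1 "u^(2^k) - u"] by simp
  define w where "w = u^(2^(2*k - 2))"
  have "w^4 = u^(2^(2*k))"
  proof -
    obtain j where "k = Suc j" using k1 by (cases k) auto
    then have "(2::nat)^(2*k) = 2^(2*k-2) * 4" by (simp add: power_add)
    then show ?thesis by (simp add: w_def power_mult[symmetric])
  qed
  then show ?thesis using c2 pw w_def by metis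
qed

lemma residue:
  assumes "ge u 0"
  shows "\<exists>c. \<sigma> c = c \<and> ge (u - c) 1"
proof -
  obtain w where w: "ge w 0" "ge (w^4 - u) 1" using froot[OF assms] by blast
  define e1 where "e1 = \<sigma> w - w"
  define e2 where "e2 = \<sigma> (\<sigma> w) - w"
  define e3 where "e3 = \<sigma> (\<sigma> (\<sigma> w)) - w"
  have e: "ge e1 1" "ge e2 1" "ge e3 1" using R1' R1s R1ss w unfolding e1_def e2_def e3_def by auto
  define c where "c = w * \<sigma> w * \<sigma> (\<sigma> w) * \<sigma> (\<sigma> (\<sigma> w))"
  have sc: "\<sigma> c = c" unfolding c_def by (simp add: algebra_simps)
  have eq: "c - w^4 = w * (e1 * (w + e2) * (w + e3) + w * e2 * (w + e3) + w * w * e3)"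
    unfolding c_def e1_def e2_def e3_def by (simp add: algebra_simps power4_eq_xxxx)
  have g1: "ge (w + e2) 0" "ge (w + e3) 0" using e w ge_add ge_mono by fastforce+
  have "ge (e1 * (w + e2) * (w + e3) + w * e2 * (w + e3) + w * w * e3) 1"
    using e g1 w ge_mult ge_add by (metis add_0 add.commute)
  then have "ge (c - w^4) 1" using eq ge_mult w(1) by fastforce
  then have "ge ((w^4 - u) + (c - w^4)) 1" using w(2) ge_add by blast
  then have "ge (c - u) 1" by (simp add: algebra_simps)
  then have "ge (- (c - u)) 1" by (simp only: ge_minus)
  then have "ge (u - c) 1" by simp
  then show ?thesis using sc by blast
qed

end

context setting begin

lemma decomp:
  assumes "y \<noteq> 0"
  shows "\<exists>c j u. c \<noteq> 0 \<and> \<sigma> c = c \<and> j < 4 \<and> u \<noteq> 0 \<and> v u = 0 \<and> y = c * \<pi>^j * u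
     \<and> v c = 4 * (v y div 4) \<and> int j = v y mod 4"
proof -
  obtain c where c: "c \<noteq> 0" "\<sigma> c = c" "v c = 4 * (v y div 4)" using fixex by blast
  define j where "j = nat (v y mod 4)"
  have j: "int j = v y mod 4" "j < 4" unfolding j_def by auto
  define u where "u = y / (c * \<pi>^j)"
  have nz: "c * \<pi>^j \<noteq> 0" using c pi_nz by simp
  have "v (c * \<pi>^j) = v c + int j" using c pi_nz by (simp add: vmult v_power v_pi)
  then have "v u = 0" unfolding u_def using assms nz c j by (simp add: v_divide)
  moreover have "y = c * \<pi>^j * u" unfolding u_def using nz by simp
  moreover have "u \<noteq> 0" unfolding u_def using assms nz by simp
  ultimately show ?thesis using c j by blast
qed

lemma v_fix_mod: "c \<noteq> 0 \<Longrightarrow> \<sigma> c = c \<Longrightarrow> v c mod 4 = 0"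
  using fixv by auto

end

locale ram = setting +
  fixes g :: "'a \<Rightarrow> 'a" and b :: int
  assumes gadd: "g (x + y) = g x + g y" and gmult: "g (x * y) = g x * g y"
    and gz: "g x = 0 \<longleftrightarrow> x = 0" and g1: "g 1 = 1"
    and vg: "x \<noteq> 0 \<Longrightarrow> v (g x) = v x"
    and gfix: "\<sigma> c = c \<Longrightarrow> g c = c"
    and Gb: "ge x 0 \<Longrightarrow> ge (g x - x) (b + 1)"
    and nGb: "\<not> (\<forall>x. ge x 0 \<longrightarrow> ge (g x - x) (b + 2))"
    and bpos: "1 \<le> b"
begin

lemma g0[simp]: "g 0 = 0" using gz by simp
lemma gminus[simp]: "g (- x) = - g x"
  using gadd[of x "- x"] by (metis add.right_inverse g0 minus_unique)
lemma gdiff[simp]: "g (x - y) = g x - g y"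
  using gadd[of x "- y"] by simp
lemma ginv[simp]: "g (inverse x) = inverse (g x)"
proof (cases "x = 0")
  case False
  have "g x * g (inverse x) = 1" using gmult[of x "inverse x"] False g1 by simp
  then show ?thesis by (metis inverse_unique)
qed simp
lemma gdiv[simp]: "g (x / y) = g x / g y"
  by (simp add: divide_inverse gmult)
lemma gpow[simp]: "g (x ^ n) = g x ^ n"
  by (induction n) (auto simp: g1 gmult)

definition D :: "'a \<Rightarrow> 'a" where "D y = g y / y - 1"

lemma gD: "y \<noteq> 0 \<Longrightarrow> g y - y = y * D y"
  unfolding D_def by (simp add: field_simps)

lemma Dmult: "x \<noteq> 0 \<Longrightarrow> y \<noteq> 0 \<Longrightarrow> D (x * y) = D x + D y + D x * D y"
  unfolding D_def by (simp add: gmult field_simps)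

lemma Dfix: "\<sigma> c = c \<Longrightarrow> c \<noteq> 0 \<Longrightarrow> z \<noteq> 0 \<Longrightarrow> D (c * z) = D z"
  unfolding D_def by (simp add: gmult gfix)

lemma D1[simp]: "D 1 = 0" unfolding D_def by (simp add: g1)

lemma Dunit: "u \<noteq> 0 \<Longrightarrow> v u = 0 \<Longrightarrow> ge (D u) (b + 1)"
proof -
  assume u: "u \<noteq> 0" "v u = 0"
  then have "ge (g u - u) (b + 1)" using Gb by (simp add: gev_def)
  then have "ge ((g u - u) / u) (b + 1)" using ge_div_v[of "g u - u" "b+1" u] u by simp
  moreover have "(g u - u) / u = D u" unfolding D_def using u by (simp add: field_simps)
  ultimately show ?thesis by simp
qed

lemma Dpi: "ge (D \<pi>) b"
proof -
  have "ge \<pi> 0" using v_pi by (simp add: gev_def)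
  then have "ge (g \<pi> - \<pi>) (b + 1)" using Gb by simp
  then have "ge ((g \<pi> - \<pi>) / \<pi>) b" using ge_div_v[of "g \<pi> - \<pi>" "b+1" \<pi>] pi_nz v_pi by simp
  moreover have "(g \<pi> - \<pi>) / \<pi> = D \<pi>" unfolding D_def using pi_nz by (simp add: field_simps)
  ultimately show ?thesis by simp
qed

lemma ge_Dmult: "x \<noteq> 0 \<Longrightarrow> y \<noteq> 0 \<Longrightarrow> ge (D x) n \<Longrightarrow> ge (D y) n \<Longrightarrow> 0 \<le> n \<Longrightarrow> ge (D (x * y)) n"
proof -
  assume a: "x \<noteq> 0" "y \<noteq> 0" "ge (D x) n" "ge (D y) n" "0 \<le> n"
  have "ge (D x * D y) (n + n)" using ge_mult a by blast
  then have "ge (D x * D y) n" using ge_mono a(5) by fastforce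
  then show ?thesis using Dmult[OF a(1,2)] ge_add a by metis
qed

lemma Dpow: "ge (D \<pi>) n \<Longrightarrow> 0 \<le> n \<Longrightarrow> ge (D (\<pi>^j)) n"
proof (induction j)
  case 0 then show ?case by simp
next
  case (Suc j)
  then show ?case using ge_Dmult[of \<pi> "\<pi>^j" n] pi_nz by simp
qed

lemma Dgen:
  assumes "y \<noteq> 0" "ge (D \<pi>) n" "0 \<le> n" "n \<le> b + 1"
  shows "ge (D y) n"
proof -
  obtain c j u where d: "c \<noteq> 0" "\<sigma> c = c" "u \<noteq> 0" "v u = 0" "y = c * (\<pi>^j * u)"
    using decomp[OF assms(1)] by (auto simp: mult.assoc)
  have "D y = D (\<pi>^j * u)" using d Dfix pi_nz by simp
  moreover have "ge (D u) n" using Dunit d ge_mono assms by blast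
  ultimately show ?thesis using ge_Dmult[of "\<pi>^j" u n] Dpow assms d pi_nz by simp
qed

lemma Dlow: "y \<noteq> 0 \<Longrightarrow> ge (D y) b"
  using Dgen[OF _ Dpi] bpos by simp

lemma glow: "ge (g y - y) (v y + b)"
proof (cases "y = 0")
  case False
  then show ?thesis using gD[OF False] ge_mult_v[OF Dlow[OF False] False] by (simp add: mult.commute add.commute)
qed simp

lemma Dpi_exact: "D \<pi> \<noteq> 0 \<and> v (D \<pi>) = b"
proof -
  have "\<not> ge (D \<pi>) (b + 1)"
  proof
    assume h: "ge (D \<pi>) (b + 1)"
    have A: "ge (g x - x) (b + 2)" if "x \<noteq> 0" "1 \<le> v x" for x
    proof -
      have "ge (D x) (b + 1)" using Dgen[OF that(1) h] bpos by simp
      then have "ge (x * D x) (v x + (b + 1))" using ge_mult_v[of "D x" "b+1" x] that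
        by (simp add: mult.commute add.commute)
      then show ?thesis using gD[OF that(1)] ge_mono that(2) by fastforce
    qed
    have "ge (g x - x) (b + 2)" if x0: "ge x 0" for x
    proof (cases "x = 0")
      case False
      show ?thesis
      proof (cases "v x = 0")
        case False
        then show ?thesis using A \<open>x \<noteq> 0\<close> x0 by (simp add: gev_def)
      next
        case True
        obtain c where c: "\<sigma> c = c" "ge (x - c) 1" using residue x0 by blast
        have "g x - x = g (x - c) - (x - c)" using gfix[OF c(1)] by simp
        moreover have "ge (g (x - c) - (x - c)) (b + 2)"
          using A[of "x - c"] c(2) by (cases "x - c = 0") (auto simp: gev_def)
        ultimately show ?thesis by simp
      qed
    qed simp
    then show False using nGb by blast
  qed
  then show ?thesis using Dpi by (auto simp: gev_def)
qed

lemma ge3: "ge (3::'a) 0"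
proof -
  have "ge (1 + 2 :: 'a) 0" using ge_add[of 1 0 2] two1 ge_mono by (fastforce simp: gev_def)
  then show ?thesis by simp
qed

lemma Dpi3: "D (\<pi>^3) \<noteq> 0 \<and> v (D (\<pi>^3)) = b"
proof -
  define t where "t = D \<pi>"
  have "\<pi>^3 = \<pi> * (\<pi> * \<pi>)" by (simp add: power3_eq_cube)
  then have "D (\<pi>^3) = t * (1 + (2 + 3 * t + t * t))"
    using Dmult pi_nz unfolding t_def by (simp add: algebra_simps)
  moreover have "ge t 1" using Dpi bpos ge_mono t_def by blast
  moreover have "ge (2 + 3 * t + t * t) 1"
  proof -
    have "ge (3 * t) 1" using ge_mult[OF ge3 \<open>ge t 1\<close>] by simp
    moreover have "ge (t * t) 1" using ge_mult[OF \<open>ge t 1\<close> \<open>ge t 1\<close>] ge_mono by fastforce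
    ultimately show ?thesis using ge_add two1 by blast
  qed
  ultimately have "1 + (2 + 3 * t + t * t) \<noteq> 0 \<and> v (1 + (2 + 3 * t + t * t)) = 0" using ge_pos_unit by blast
  then show ?thesis using \<open>D (\<pi>^3) = _\<close> Dpi_exact t_def vmult[of t] by simp
qed

lemma Dodd:
  assumes "y \<noteq> 0" "odd (v y)"
  shows "D y \<noteq> 0 \<and> v (D y) = b"
proof -
  obtain c j u where d: "c \<noteq> 0" "\<sigma> c = c" "u \<noteq> 0" "v u = 0" "y = c * (\<pi>^j * u)"
     "j < 4" "v c = 4 * (v y div 4)" "int j = v y mod 4"
    using decomp[OF assms(1)] by (auto simp: mult.assoc)
  have "odd (int j)" using d(8) assms(2) by presburger
  moreover have "j = 0 \<or> j = 1 \<or> j = 2 \<or> j = 3" using d(6) by auto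
  ultimately have j: "j = 1 \<or> j = 3" by auto
  have Dj: "D (\<pi>^j) \<noteq> 0 \<and> v (D (\<pi>^j)) = b" using j Dpi_exact Dpi3 by auto
  have "D y = D (\<pi>^j * u)" using d Dfix pi_nz by simp
  also have "\<dots> = D (\<pi>^j) + (D u + D (\<pi>^j) * D u)" using Dmult pi_nz d by simp
  finally have e: "D y = D (\<pi>^j) + (D u + D (\<pi>^j) * D u)" .
  have "ge (D u) (b + 1)" using Dunit d by blast
  moreover have "ge (D (\<pi>^j) * D u) (b + 1)" using ge_mult[OF _ \<open>ge (D u) (b+1)\<close>, of "D (\<pi>^j)" 0] Dj bpos
    by (simp add: gev_def)
  ultimately have "ge (D u + D (\<pi>^j) * D u) (v (D (\<pi>^j)) + 1)" using ge_add Dj by simp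
  then show ?thesis using v_add_dom[of "D (\<pi>^j)"] Dj e by simp
qed

lemma godd: "y \<noteq> 0 \<Longrightarrow> odd (v y) \<Longrightarrow> g y - y \<noteq> 0 \<and> v (g y - y) = v y + b"
  using gD Dodd vmult by simp

end

sublocale setting \<subseteq> S1: ram v \<sigma> \<pi> b1 b2 e0 \<sigma> b1
  by unfold_locales (use R1 nR1 vs b1pos sinj in \<open>auto simp: injD\<close>)

sublocale setting \<subseteq> S2: ram v \<sigma> \<pi> b1 b2 e0 "\<lambda>x. \<sigma> (\<sigma> x)" b2
  by unfold_locales (use R2 nR2 vs b1pos e0pos b2def in \<open>auto\<close>)

context setting begin

lemma test1: "S2.D \<pi> = \<sigma> (\<sigma> \<pi>) / \<pi> - 1" unfolding S2.D_def by simp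
lemma test2: "S1.D \<pi> = \<sigma> \<pi> / \<pi> - 1" unfolding S1.D_def by simp

end

context setting begin

abbreviation "\<tau> \<equiv> S1.D \<pi>"

lemma tau: "\<tau> \<noteq> 0" "v \<tau> = b1" using S1.Dpi_exact by auto
lemma tau2: "S2.D \<pi> \<noteq> 0" "v (S2.D \<pi>) = b2" using S2.Dpi_exact by auto

lemma ge_strict: "x \<noteq> 0 \<Longrightarrow> ge x n \<Longrightarrow> v x < n \<Longrightarrow> False"
  by (simp add: gev_def)

lemma b1_lt: "b1 < 2 * e0"
proof (rule ccontr)
  assume "\<not> b1 < 2 * e0"
  then have h: "2 * e0 + 1 \<le> b1" using b1odd by presburger
  have sp: "\<sigma> \<pi> \<noteq> 0" using pi_nz by simp
  have eq: "S2.D \<pi> = 2 * \<tau> + (\<sigma> \<tau> - \<tau>) + \<tau> * \<sigma> \<tau>"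
    unfolding S1.D_def S2.D_def using pi_nz sp by (simp add: field_simps)
  have "ge (2 * \<tau>) (b2 + 1)" by (rule ge_mono[OF ge_2mult[OF ge_self[of \<tau>]]]) (use tau b2def e0pos in simp)
  moreover have "ge (\<sigma> \<tau> - \<tau>) (b2 + 1)" using S1.glow[of \<tau>] tau h b2def ge_mono by fastforce
  moreover have "ge (\<tau> * \<sigma> \<tau>) (b2 + 1)"
    using ge_mult[OF ge_self[of \<tau>] ge_self[of "\<sigma> \<tau>"]] tau vs h b2def ge_mono by fastforce
  ultimately have "ge (S2.D \<pi>) (b2 + 1)" unfolding eq using ge_add by blast
  then show False using tau2 ge_strict by fastforce
qed

lemma b2_lt: "b2 < 4 * e0" using b1_lt b2def by simp

lemma K1even: "\<sigma> (\<sigma> T) = T \<Longrightarrow> T \<noteq> 0 \<Longrightarrow> even (v T)"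
proof -
  assume a: "\<sigma> (\<sigma> T) = T" "T \<noteq> 0"
  have "\<sigma> (T * \<sigma> T) = T * \<sigma> T" using a by (simp add: mult.commute)
  then have "4 dvd v (T * \<sigma> T)" using fixv a by simp
  then show ?thesis using a vmult vs by simp presburger
qed

definition "\<pi>1 = \<pi> * \<sigma> (\<sigma> \<pi>)"

lemma pi1: "\<pi>1 \<noteq> 0" "v \<pi>1 = 2" "\<sigma> (\<sigma> \<pi>1) = \<pi>1"
  unfolding \<pi>1_def using pi_nz vmult vs v_pi by (auto simp: mult.commute)

lemma Dpi1: "S1.D \<pi>1 \<noteq> 0 \<and> v (S1.D \<pi>1) = 2 * b1"
proof -
  have sp: "\<sigma> \<pi> \<noteq> 0" "\<sigma> (\<sigma> \<pi>) \<noteq> 0" using pi_nz by auto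
  have eq: "S1.D \<pi>1 = \<tau> * \<sigma> (\<sigma> \<tau>) + (\<tau> + \<sigma> (\<sigma> \<tau>))"
    unfolding S1.D_def \<pi>1_def using pi_nz sp by (simp add: field_simps)
  have nz: "\<tau> * \<sigma> (\<sigma> \<tau>) \<noteq> 0" "v (\<tau> * \<sigma> (\<sigma> \<tau>)) = 2 * b1" using tau vmult vs by auto
  have A: "ge (2 * \<tau>) (2 * b1 + 1)" by (rule ge_mono[OF ge_2mult[OF ge_self[of \<tau>]]]) (use tau b1_lt b1pos in simp)
  have B: "ge (\<sigma> (\<sigma> \<tau>) - \<tau>) (2 * b1 + 1)" using S2.glow[of \<tau>] tau b1_lt b2def e0b1 ge_mono by fastforce
  have "ge (\<tau> + \<sigma> (\<sigma> \<tau>)) (2 * b1 + 1)" using ge_add[OF A B] by simp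
  then have "ge (\<tau> + \<sigma> (\<sigma> \<tau>)) (v (\<tau> * \<sigma> (\<sigma> \<tau>)) + 1)" using nz by simp
  then show ?thesis using v_add_dom[OF nz(1)] eq nz by simp
qed

lemma K1lead:
  assumes "\<sigma> (\<sigma> T) = T" "T \<noteq> 0"
  shows "\<exists>m. \<sigma> (\<sigma> m) = m \<and> ge (\<sigma> m - m) (v T + 2 * b1) \<and> ge (T - m) (v T + 1)
     \<and> (v T mod 4 = 0 \<longrightarrow> \<sigma> m = m)"
proof -
  obtain c where c: "c \<noteq> 0" "\<sigma> c = c" "v c = 4 * (v T div 4)" using fixex by blast
  have ev: "even (v T)" using K1even assms by blast
  define j :: nat where "j = (if v T mod 4 = 0 then 0 else 1)"
  have "v T mod 4 = 0 \<or> v T mod 4 = 2" using ev by presburger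
  then have j: "v T = v c + 2 * int j" "j = 0 \<or> j = 1" "v T mod 4 = 0 \<longrightarrow> j = 0"
    unfolding j_def using c(3) by (auto, presburger+)
  have nz: "c * \<pi>1^j \<noteq> 0" using c pi1 by simp
  have "v (c * \<pi>1^j) = v c + int j * 2" using c(1) pi1 by (simp add: vmult v_power)
  then have vcj: "v (c * \<pi>1^j) = v T" using j(1) by simp
  define w where "w = T / (c * \<pi>1^j)"
  have w: "w \<noteq> 0" "v w = 0" unfolding w_def using nz assms vcj by (auto simp: v_divide)
  obtain c0 where c0: "\<sigma> c0 = c0" "ge (w - c0) 1" using residue[of w] w by (auto simp: gev_def)
  have c0O: "ge c0 0" using ge_diff[of w 0 "w - c0"] c0 w ge_mono by (fastforce simp: gev_def)
  define m where "m = c * c0 * \<pi>1^j"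
  have "\<sigma> (\<sigma> m) = m" unfolding m_def using c c0 pi1 by simp
  moreover have "T - m = (c * \<pi>1^j) * (w - c0)" unfolding m_def w_def using nz by (simp add: field_simps)
  then have "ge (T - m) (v T + 1)" using ge_mult_v[OF c0(2) nz] vcj by (simp add: mult.commute add.commute)
  moreover have "ge (\<sigma> m - m) (v T + 2 * b1) \<and> (v T mod 4 = 0 \<longrightarrow> \<sigma> m = m)"
  proof (cases "j = 0")
    case True then show ?thesis unfolding m_def using c c0 by simp
  next
    case False
    then have j1: "j = 1" "v T mod 4 \<noteq> 0" using j(2,3) False by auto
    have "\<sigma> m - m = (c * c0) * (\<pi>1 * S1.D \<pi>1)" unfolding m_def using j1 S1.gD[OF pi1(1)] c c0
      by (simp add: algebra_simps)
    moreover have "ge (\<pi>1 * S1.D \<pi>1) (2 + 2 * b1)" using Dpi1 pi1 vmult by (simp add: gev_def)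
    moreover have "ge (c * c0) (v c)" using ge_mult[OF ge_self[of c] c0O] by simp
    ultimately have "ge (\<sigma> m - m) (v c + (2 + 2 * b1))" using ge_mult by metis
    then show ?thesis using j j1 by (simp add: add.assoc)
  qed
  ultimately show ?thesis by blast
qed

lemma K1low_aux:
  "\<sigma> (\<sigma> T) = T \<Longrightarrow> ge (\<sigma> T - T) (v T + min (2 * b1) (int n))"
proof (induction n arbitrary: T)
  case 0
  then show ?case using ge_diff[OF ge_s[THEN iffD2, OF ge_self] ge_self, of T] b1pos by simp
next
  case (Suc n)
  show ?case
  proof (cases "T = 0")
    case False
    obtain m where m: "\<sigma> (\<sigma> m) = m" "ge (\<sigma> m - m) (v T + 2 * b1)" "ge (T - m) (v T + 1)"
      using K1lead[OF Suc.prems False] by blast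
    have "\<sigma> (\<sigma> (T - m)) = T - m" using m Suc.prems by simp
    then have IH: "ge (\<sigma> (T - m) - (T - m)) (v (T - m) + min (2 * b1) (int n))" using Suc.IH by blast
    have "ge (\<sigma> (T - m) - (T - m)) (v T + min (2 * b1) (int (Suc n)))"
    proof (cases "T - m = 0")
      case False
      then have "v T + 1 \<le> v (T - m)" using m(3) by (simp add: gev_def)
      then show ?thesis using IH ge_mono by fastforce
    qed simp
    moreover have "ge (\<sigma> m - m) (v T + min (2 * b1) (int (Suc n)))" using m(2) ge_mono by fastforce
    moreover have "\<sigma> T - T = (\<sigma> (T - m) - (T - m)) + (\<sigma> m - m)" by simp
    ultimately show ?thesis using ge_add by metis
  qed simp
qed

lemma K1low: "\<sigma> (\<sigma> T) = T \<Longrightarrow> ge (\<sigma> T - T) (v T + 2 * b1)"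
  using K1low_aux[of T "nat (2 * b1)"] b1pos by simp

lemma K1exact:
  assumes "\<sigma> (\<sigma> T) = T" "T \<noteq> 0" "v T mod 4 = 2"
  shows "\<sigma> T - T \<noteq> 0 \<and> v (\<sigma> T - T) = v T + 2 * b1"
proof -
  have "4 * ((v T - 2) div 4) = v T - 2" using assms(3) by presburger
  then obtain c where c: "c \<noteq> 0" "\<sigma> c = c" "v c = v T - 2"
    using fixex[of "(v T - 2) div 4"] by metis
  have nz: "c * \<pi>1 \<noteq> 0" "v (c * \<pi>1) = v T" using c pi1 vmult by auto
  define u where "u = T / (c * \<pi>1)"
  have u: "u \<noteq> 0" "v u = 0" "\<sigma> (\<sigma> u) = u" unfolding u_def using nz assms c pi1 by (auto simp: v_divide)
  obtain m where m: "\<sigma> (\<sigma> m) = m" "ge (u - m) 1" "\<sigma> m = m" using K1lead[OF u(3) u(1)] u by auto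
  have "\<sigma> (\<sigma> (u - m)) = u - m" using u m by simp
  then have "ge (\<sigma> (u - m) - (u - m)) (v (u - m) + 2 * b1)" using K1low by blast
  then have "ge (\<sigma> (u - m) - (u - m)) (2 * b1 + 1)" using m(2)
    by (cases "u - m = 0") (auto simp: gev_def)
  then have "ge (\<sigma> u - u) (2 * b1 + 1)" using m by simp
  then have Du: "ge (S1.D u) (2 * b1 + 1)" using S1.gD[OF u(1)] ge_div_v[of "\<sigma> u - u" _ u] u by simp
  have "T = c * (\<pi>1 * u)" unfolding u_def using nz by simp
  then have "S1.D T = S1.D (\<pi>1 * u)" using S1.Dfix c pi1 u by simp
  also have "\<dots> = S1.D \<pi>1 + (S1.D u + S1.D \<pi>1 * S1.D u)" using S1.Dmult pi1 u by simp
  finally have e: "S1.D T = S1.D \<pi>1 + (S1.D u + S1.D \<pi>1 * S1.D u)" .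
  have "ge (S1.D \<pi>1 * S1.D u) (2 * b1 + 1)" using ge_mult[OF _ Du, of "S1.D \<pi>1" 0] Dpi1 b1pos
    by (simp add: gev_def)
  then have "ge (S1.D u + S1.D \<pi>1 * S1.D u) (v (S1.D \<pi>1) + 1)" using ge_add Du Dpi1 by simp
  then have "S1.D T \<noteq> 0 \<and> v (S1.D T) = 2 * b1" using v_add_dom[of "S1.D \<pi>1"] Dpi1 e by simp
  then show ?thesis using S1.gD[OF assms(2)] vmult assms(2) by simp
qed

end

context setting begin

definition "lam = \<pi> / (\<pi> - \<sigma> (\<sigma> \<pi>))"
definition "rho x = lam * ((\<sigma> x + x) - \<sigma> (\<sigma> (\<sigma> x + x)))"
definition "mu x = \<sigma> x + x - rho x"

lemma pdiff: "\<pi> - \<sigma> (\<sigma> \<pi>) \<noteq> 0 \<and> v (\<pi> - \<sigma> (\<sigma> \<pi>)) = 1 + b2"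
proof -
  have "\<sigma> (\<sigma> \<pi>) - \<pi> \<noteq> 0 \<and> v (\<sigma> (\<sigma> \<pi>) - \<pi>) = v \<pi> + b2"
    using S2.godd[of \<pi>] pi_nz v_pi by simp
  moreover have "\<pi> - \<sigma> (\<sigma> \<pi>) = - (\<sigma> (\<sigma> \<pi>) - \<pi>)" by simp
  ultimately show ?thesis using v_pi by (metis v_minus neg_equal_0_iff_equal)
qed

lemma lam: "lam \<noteq> 0" "v lam = - b2" "lam + \<sigma> (\<sigma> lam) = 1"
proof -
  show "lam \<noteq> 0" "v lam = - b2" unfolding lam_def using pdiff pi_nz v_pi by (auto simp: v_divide)
  have "\<sigma> (\<sigma> \<pi>) - \<pi> \<noteq> 0" using pdiff by (metis eq_iff_diff_eq_0)
  have e: "\<sigma> (\<sigma> lam) = - (\<sigma> (\<sigma> \<pi>) / (\<pi> - \<sigma> (\<sigma> \<pi>)))" unfolding lam_def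
    by (metis minus_diff_eq divide_minus_right s4' sdiv sdiff)
  show "lam + \<sigma> (\<sigma> lam) = 1" unfolding e unfolding lam_def using pdiff
    by (simp add: diff_divide_distrib[symmetric])
qed

lemma part1:
  assumes "\<alpha> \<noteq> 0" "odd (v \<alpha>)"
  shows "rho \<alpha> \<noteq> 0 \<and> v (rho \<alpha>) = v \<alpha> + 2 * e0 \<and> mu \<alpha> \<noteq> 0 \<and> v (mu \<alpha>) = v \<alpha> + b1
     \<and> \<sigma> (\<sigma> (mu \<alpha>)) = mu \<alpha>"
proof -
  define a where "a = v \<alpha>"
  define \<beta> where "\<beta> = \<sigma> \<alpha> + \<alpha>"
  define T where "T = \<alpha> + \<sigma> (\<sigma> \<alpha>)"
  define \<Delta> where "\<Delta> = \<beta> - \<sigma> (\<sigma> \<beta>)"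
  have d1: "\<sigma> \<alpha> - \<alpha> \<noteq> 0" "v (\<sigma> \<alpha> - \<alpha>) = a + b1" using S1.godd assms a_def by auto
  have "ge (2 * \<alpha>) (a + 4 * e0)" using ge_2mult[OF ge_self] a_def by simp
  then have g2: "ge (2 * \<alpha>) (v (\<sigma> \<alpha> - \<alpha>) + 1)" by (rule ge_mono) (use d1 b1_lt b1pos in simp)
  have h: "(\<sigma> \<alpha> - \<alpha>) + 2 * \<alpha> \<noteq> 0 \<and> v ((\<sigma> \<alpha> - \<alpha>) + 2 * \<alpha>) = a + b1"
    using v_add_dom[OF d1(1) g2] unfolding d1(2) .
  have beq: "\<beta> = (\<sigma> \<alpha> - \<alpha>) + 2 * \<alpha>" unfolding \<beta>_def by simp
  have vb': "\<beta> \<noteq> 0 \<and> v \<beta> = a + b1" unfolding beq by (rule h)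
  then have vb: "\<beta> \<noteq> 0" "v \<beta> = a + b1" by auto
  have eqD: "\<Delta> = (- 2 * (\<sigma> (\<sigma> \<alpha>) - \<sigma> \<alpha>)) + (- (\<sigma> T - T))"
    unfolding \<Delta>_def \<beta>_def T_def by (simp add: algebra_simps)
  have X: "- 2 * (\<sigma> (\<sigma> \<alpha>) - \<sigma> \<alpha>) \<noteq> 0" "v (- 2 * (\<sigma> (\<sigma> \<alpha>) - \<sigma> \<alpha>)) = a + b1 + 4 * e0"
  proof -
    have "\<sigma> (\<sigma> \<alpha>) - \<sigma> \<alpha> \<noteq> 0" using d1(1) seq0[of "\<sigma> \<alpha> - \<alpha>"] by simp
    moreover have "v (\<sigma> (\<sigma> \<alpha>) - \<sigma> \<alpha>) = a + b1" using vs[OF d1(1)] d1(2) by simp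
    ultimately show "- 2 * (\<sigma> (\<sigma> \<alpha>) - \<sigma> \<alpha>) \<noteq> 0" "v (- 2 * (\<sigma> (\<sigma> \<alpha>) - \<sigma> \<alpha>)) = a + b1 + 4 * e0"
      using vmult[of "-2" "\<sigma> (\<sigma> \<alpha>) - \<sigma> \<alpha>"] two by simp_all
  qed
  have gT: "ge T (a + b2)"
  proof -
    have "T = 2 * \<alpha> + (\<sigma> (\<sigma> \<alpha>) - \<alpha>)" unfolding T_def by simp
    moreover have "ge (2 * \<alpha>) (a + b2)" using \<open>ge (2 * \<alpha>) (a + 4 * e0)\<close> b2_lt ge_mono by fastforce
    moreover have "ge (\<sigma> (\<sigma> \<alpha>) - \<alpha>) (a + b2)" using S2.glow[of \<alpha>] a_def by simp
    ultimately show ?thesis using ge_add by metis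
  qed
  have "\<sigma> (\<sigma> T) = T" unfolding T_def by simp
  then have "ge (\<sigma> T - T) (v T + 2 * b1)" by (rule K1low)
  then have "ge (\<sigma> T - T) (a + b2 + 2 * b1)" using gT by (cases "T = 0") (auto simp: gev_def)
  then have "ge (\<sigma> T - T) (a + b1 + 4 * e0 + 1)" by (rule ge_mono) (use b2def e0b1 in simp)
  then have "ge (- (\<sigma> T - T)) (a + b1 + 4 * e0 + 1)" by (simp only: ge_minus)
  then have vD: "\<Delta> \<noteq> 0" "v \<Delta> = a + b1 + 4 * e0" using v_add_dom[OF X(1)] X eqD by auto
  have rho: "rho \<alpha> = lam * \<Delta>" unfolding rho_def \<Delta>_def \<beta>_def by simp
  have vr: "rho \<alpha> \<noteq> 0" "v (rho \<alpha>) = a + 2 * e0" using rho lam vD vmult b2def by auto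
  have mu: "mu \<alpha> = \<beta> + (- rho \<alpha>)" unfolding mu_def \<beta>_def by simp
  have gr: "ge (- rho \<alpha>) (v \<beta> + 1)" using vr vb b1_lt by (simp add: gev_def)
  have vm': "mu \<alpha> \<noteq> 0 \<and> v (mu \<alpha>) = v \<beta>" unfolding mu by (rule v_add_dom[OF vb(1) gr])
  then have vm: "mu \<alpha> \<noteq> 0" "v (mu \<alpha>) = a + b1" using vb by auto
  have sD: "\<sigma> (\<sigma> \<Delta>) = - \<Delta>" unfolding \<Delta>_def by simp
  have sb: "\<sigma> (\<sigma> \<beta>) = \<beta> - \<Delta>" unfolding \<Delta>_def by simp
  have sl: "\<sigma> (\<sigma> lam) = 1 - lam" using lam(3) by (simp add: eq_diff_eq add.commute)
  have mu2: "mu \<alpha> = \<beta> - lam * \<Delta>" using mu rho by simp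
  have "\<sigma> (\<sigma> (mu \<alpha>)) = \<sigma> (\<sigma> \<beta>) - \<sigma> (\<sigma> lam) * \<sigma> (\<sigma> \<Delta>)" unfolding mu2 by simp
  also have "\<dots> = (\<beta> - \<Delta>) + (1 - lam) * \<Delta>" unfolding sD sb sl by simp
  also have "\<dots> = \<beta> - lam * \<Delta>" by (simp add: algebra_simps)
  finally have "\<sigma> (\<sigma> (mu \<alpha>)) = mu \<alpha>" using mu2 by simp
  then show ?thesis using vr vm a_def by simp
qed

end

context setting begin

definition "E x = \<sigma> (mu x) - mu x"

lemma mu_K1: "\<sigma> (\<sigma> (mu x)) = mu x"
proof -
  define \<beta> where "\<beta> = \<sigma> x + x"
  define \<Delta> where "\<Delta> = \<beta> - \<sigma> (\<sigma> \<beta>)"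
  have sD: "\<sigma> (\<sigma> \<Delta>) = - \<Delta>" unfolding \<Delta>_def by simp
  have sb: "\<sigma> (\<sigma> \<beta>) = \<beta> - \<Delta>" unfolding \<Delta>_def by simp
  have sl: "\<sigma> (\<sigma> lam) = 1 - lam" using lam(3) by (simp add: eq_diff_eq add.commute)
  have mu2: "mu x = \<beta> - lam * \<Delta>" unfolding mu_def rho_def \<beta>_def \<Delta>_def by simp
  have "\<sigma> (\<sigma> (mu x)) = \<sigma> (\<sigma> \<beta>) - \<sigma> (\<sigma> lam) * \<sigma> (\<sigma> \<Delta>)" unfolding mu2 by simp
  also have "\<dots> = (\<beta> - \<Delta>) + (1 - lam) * \<Delta>" unfolding sD sb sl by simp
  also have "\<dots> = \<beta> - lam * \<Delta>" by (simp add: algebra_simps)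
  finally show ?thesis using mu2 by simp
qed

lemma mu_add: "mu (x + y) = mu x + mu y"
  unfolding mu_def rho_def by (simp add: algebra_simps)

lemma mu_smul: "\<sigma> c = c \<Longrightarrow> mu (c * x) = c * mu x"
  unfolding mu_def rho_def by (simp add: algebra_simps)

lemma E_add: "E (x + y) = E x + E y"
  unfolding E_def mu_add by simp

lemma E_smul: "\<sigma> c = c \<Longrightarrow> E (c * x) = c * E x"
  unfolding E_def using mu_smul by (simp add: algebra_simps)

lemma E_sigma: "\<sigma> (E x) = - E x"
  unfolding E_def using mu_K1 by simp

lemma part2:
  assumes a0: "\<alpha>0 \<noteq> 0" "odd (v \<alpha>0)" "(v \<alpha>0 + b1) mod 4 = 0"
  shows "\<exists>\<alpha>. \<alpha> \<noteq> 0 \<and> v \<alpha> = v \<alpha>0 \<and> \<sigma> (mu \<alpha>) = mu \<alpha>"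
proof (cases "E \<alpha>0 = 0")
  case True
  then show ?thesis using a0 unfolding E_def by auto
next
  case False
  define a where "a = v \<alpha>0"
  define \<delta> where "\<delta> = \<alpha>0 * \<pi>^2"
  have d: "\<delta> \<noteq> 0" "v \<delta> = a + 2" unfolding \<delta>_def a_def using a0 pi_nz v_pi by (auto simp: vmult v_power)
  have "odd (v \<delta>)" using d a0 a_def by simp
  then have p1: "mu \<delta> \<noteq> 0" "v (mu \<delta>) = a + 2 + b1" "\<sigma> (\<sigma> (mu \<delta>)) = mu \<delta>" using part1[of \<delta>] d by auto
  have "v (mu \<delta>) mod 4 = 2" using p1 a0 a_def by presburger
  then have Ed: "E \<delta> \<noteq> 0" "v (E \<delta>) = a + 2 + 3 * b1" using K1exact[OF p1(3) p1(1)] p1 unfolding E_def by auto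
  define c where "c = E \<alpha>0 / E \<delta>"
  have c: "c \<noteq> 0" "\<sigma> c = c" unfolding c_def using False Ed E_sigma by auto
  have "ge (E \<alpha>0) (v (mu \<alpha>0) + 2 * b1)" unfolding E_def using K1low mu_K1 by blast
  moreover have "v (mu \<alpha>0) = a + b1" using part1[OF a0(1,2)] a_def by simp
  ultimately have "a + 3 * b1 \<le> v (E \<alpha>0)" using False by (simp add: gev_def)
  moreover have "v c = v (E \<alpha>0) - (a + 2 + 3 * b1)" unfolding c_def using False Ed by (simp add: v_divide)
  moreover have "4 dvd v c" using fixv c by blast
  ultimately have vc: "0 \<le> v c" by presburger
  define \<alpha> where "\<alpha> = \<alpha>0 + (- (c * \<delta>))"
  have "ge (- (c * \<delta>)) (v \<alpha>0 + 1)" using vc d c a_def by (simp add: gev_def vmult)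
  then have va: "\<alpha> \<noteq> 0 \<and> v \<alpha> = v \<alpha>0" unfolding \<alpha>_def by (rule v_add_dom[OF a0(1)])
  have ae: "\<alpha> = \<alpha>0 + (- c) * \<delta>" unfolding \<alpha>_def by simp
  have "E \<alpha> = E \<alpha>0 + E ((- c) * \<delta>)" unfolding ae by (rule E_add)
  also have "\<dots> = E \<alpha>0 + (- c) * E \<delta>" using E_smul[of "- c" \<delta>] c by simp
  also have "\<dots> = 0" unfolding c_def using Ed by simp
  finally have "\<sigma> (mu \<alpha>) = mu \<alpha>" unfolding E_def by simp
  then show ?thesis using va by blast
qed

lemma exists_val: "\<exists>x. x \<noteq> 0 \<and> v x = n"
proof -
  obtain c where c: "c \<noteq> 0" "\<sigma> c = c" "v c = 4 * (n div 4)" using fixex by blast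
  define x where "x = c * \<pi> ^ nat (n mod 4)"
  have "x \<noteq> 0" "v x = n" unfolding x_def using c pi_nz v_pi by (auto simp: vmult v_power)
  then show ?thesis by blast
qed

end

context vfield begin

lemma breaks_analysis:
  fixes \<sigma> :: "'k \<Rightarrow> 'k"
  assumes sadd: "\<And>x y. \<sigma> (x + y) = \<sigma> x + \<sigma> y"
    and s0: "\<And>x. \<sigma> x = 0 \<longleftrightarrow> x = 0"
    and vs: "\<And>x. x \<noteq> 0 \<Longrightarrow> v (\<sigma> x) = v x"
    and s4: "\<And>x. \<sigma> (\<sigma> (\<sigma> (\<sigma> x))) = x"
    and br: "lower_breaks v \<sigma> = {b1, b2}" "b1 < b2"
  shows "(\<forall>x. ge x 0 \<longrightarrow> ge (\<sigma> x - x) (b1 + 1)) \<and> \<not> (\<forall>x. ge x 0 \<longrightarrow> ge (\<sigma> x - x) (b1 + 2))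
    \<and> (\<forall>x. ge x 0 \<longrightarrow> ge (\<sigma> (\<sigma> x) - x) (b2 + 1)) \<and> \<not> (\<forall>x. ge x 0 \<longrightarrow> ge (\<sigma> (\<sigma> x) - x) (b2 + 2))
    \<and> 1 \<le> b1"
proof -
  have sm: "\<sigma> (- x) = - \<sigma> x" for x
    using sadd[of x "- x"] s0[of 0] by (metis add.right_inverse minus_unique)
  have sd: "\<sigma> (x - y) = \<sigma> x - \<sigma> y" for x y using sadd[of x "- y"] sm by simp
  have gs: "ge (\<sigma> x) n \<longleftrightarrow> ge x n" for x n by (cases "x = 0") (auto simp: gev_def vs s0)
  define cond where "cond g j \<longleftrightarrow> (\<forall>x\<in>val_ring v. g x - x = 0 \<or> j + 1 \<le> v (g x - x))" for g :: "'k \<Rightarrow> 'k" and j :: int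
  have cond_ge: "cond g j \<longleftrightarrow> (\<forall>x. ge x 0 \<longrightarrow> ge (g x - x) (j + 1))" for g j
    unfolding cond_def val_ring_def gev_def by auto
  have G: "lower_ram_group v \<sigma> j = {g \<in> cyc_group \<sigma>. cond g j}" for j
    unfolding lower_ram_group_def cond_def by simp
  have cyc: "g \<in> cyc_group \<sigma> \<longleftrightarrow> (\<exists>k<4. g = \<sigma> ^^ k)" for g unfolding cyc_group_def by auto
  define P where "P j = cond \<sigma> j" for j
  define Q where "Q j = cond (\<lambda>x. \<sigma> (\<sigma> x)) j" for j
  have f1: "\<sigma> ^^ 1 = \<sigma>" by simp
  have f2: "\<sigma> ^^ 2 = (\<lambda>x. \<sigma> (\<sigma> x))" by (simp add: numeral_2_eq_2 fun_eq_iff)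
  have f3: "\<sigma> ^^ 3 = (\<lambda>x. \<sigma> (\<sigma> (\<sigma> x)))" by (simp add: numeral_3_eq_3 fun_eq_iff)
  have c0: "cond (\<sigma> ^^ 0) j" for j unfolding cond_def by simp
  have PQ: "P j \<Longrightarrow> Q j" for j
    unfolding P_def Q_def cond_ge
  proof (intro allI impI)
    fix x assume h: "\<forall>x. ge x 0 \<longrightarrow> ge (\<sigma> x - x) (j + 1)" and x: "ge x 0"
    have "\<sigma> (\<sigma> x) - x = \<sigma> (\<sigma> x - x) + (\<sigma> x - x)" using sd by simp
    then show "ge (\<sigma> (\<sigma> x) - x) (j + 1)" using h x gs ge_add by metis
  qed
  have c3: "cond (\<lambda>x. \<sigma> (\<sigma> (\<sigma> x))) j \<longleftrightarrow> P j" for j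
    unfolding P_def cond_ge
  proof
    assume h: "\<forall>x. ge x 0 \<longrightarrow> ge (\<sigma> (\<sigma> (\<sigma> x)) - x) (j + 1)"
    show "\<forall>x. ge x 0 \<longrightarrow> ge (\<sigma> x - x) (j + 1)"
    proof (intro allI impI)
      fix x assume x: "ge x 0"
      have "ge (\<sigma> (\<sigma> (\<sigma> (\<sigma> x))) - \<sigma> x) (j + 1)" using h x gs by blast
      then show "ge (\<sigma> x - x) (j + 1)" using s4 by (metis ge_minus minus_diff_eq)
    qed
  next
    assume h: "\<forall>x. ge x 0 \<longrightarrow> ge (\<sigma> x - x) (j + 1)"
    show "\<forall>x. ge x 0 \<longrightarrow> ge (\<sigma> (\<sigma> (\<sigma> x)) - x) (j + 1)"
    proof (intro allI impI)
      fix x assume x: "ge x 0"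
      have "\<sigma> (\<sigma> (\<sigma> x)) - x = \<sigma> (\<sigma> (\<sigma> x - x)) + (\<sigma> (\<sigma> x - x) + (\<sigma> x - x))" using sd by simp
      moreover have "ge (\<sigma> x - x) (j + 1)" using h x by blast
      ultimately show "ge (\<sigma> (\<sigma> (\<sigma> x)) - x) (j + 1)" using gs ge_add by metis
    qed
  qed
  have anti: "cond g j \<Longrightarrow> i \<le> j \<Longrightarrow> cond g i" for g i j unfolding cond_def by force
  have brk: "1 \<le> b \<and> ((P b \<and> \<not> P (b + 1)) \<or> (Q b \<and> \<not> Q (b + 1)))" if "b \<in> lower_breaks v \<sigma>" for b
  proof -
    have b1: "1 \<le> b" and ne: "lower_ram_group v \<sigma> b \<noteq> lower_ram_group v \<sigma> (b + 1)"
      using that unfolding lower_breaks_def by auto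
    have "\<exists>k<4. cond (\<sigma> ^^ k) b \<noteq> cond (\<sigma> ^^ k) (b + 1)"
    proof (rule ccontr)
      assume "\<not> ?thesis"
      then have "\<forall>k<4. cond (\<sigma> ^^ k) b = cond (\<sigma> ^^ k) (b + 1)" by blast
      then have "lower_ram_group v \<sigma> b = lower_ram_group v \<sigma> (b + 1)" unfolding G cyc by auto
      then show False using ne by blast
    qed
    then obtain k where k: "k < 4" "cond (\<sigma> ^^ k) b \<noteq> cond (\<sigma> ^^ k) (b + 1)" by blast
    have "k = 0 \<or> k = 1 \<or> k = 2 \<or> k = 3" using k by auto
    then have "P b \<noteq> P (b + 1) \<or> Q b \<noteq> Q (b + 1)"
      using k c0 c3 f1 f2 f3 unfolding P_def Q_def by auto
    moreover have "P (b + 1) \<Longrightarrow> P b" "Q (b + 1) \<Longrightarrow> Q b" unfolding P_def Q_def using anti by auto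
    ultimately show ?thesis using b1 by blast
  qed
  have B1: "1 \<le> b1 \<and> ((P b1 \<and> \<not> P (b1 + 1)) \<or> (Q b1 \<and> \<not> Q (b1 + 1)))" using brk br by auto
  have B2: "1 \<le> b2 \<and> ((P b2 \<and> \<not> P (b2 + 1)) \<or> (Q b2 \<and> \<not> Q (b2 + 1)))" using brk br by auto
  have Pa: "P j \<Longrightarrow> i \<le> j \<Longrightarrow> P i" for i j unfolding P_def using anti by blast
  have Qa: "Q j \<Longrightarrow> i \<le> j \<Longrightarrow> Q i" for i j unfolding Q_def using anti by blast
  have q2: "Q b2 \<and> \<not> Q (b2 + 1)"
  proof (rule ccontr)
    assume "\<not> ?thesis"
    then have "P b2" using B2 by blast
    then have "Q b2" using PQ by blast
    then show False using B1 Pa Qa \<open>P b2\<close> br(2) by fastforce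
  qed
  have p1: "P b1 \<and> \<not> P (b1 + 1)" using B1 q2 Qa br(2) by fastforce
  show ?thesis using p1 q2 B1 unfolding P_def Q_def cond_ge by (simp add: add.assoc)
qed

end

theorem lemma3p6:
  fixes v2 :: "'k::field_char_0 \<Rightarrow> int" and \<sigma> :: "'k \<Rightarrow> 'k"
    and e0 b1 b2 :: int
  assumes local: "two_adic_local_field v2"
    and aut: "field_automorphism \<sigma>"
    and ord4: "\<sigma> ^^ 4 = id" and not2: "\<sigma> ^^ 2 \<noteq> id"
    and val_inv: "\<forall>x. x \<noteq> 0 \<longrightarrow> v2 (\<sigma> x) = v2 x"
    and tot_ram: "{v2 x | x. x \<noteq> 0 \<and> \<sigma> x = x} = {4 * k | k. True}"
    and e0_def: "v2 2 = 4 * e0"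
    and breaks: "lower_breaks v2 \<sigma> = {b1, b2}" and "b1 < b2"
    and "odd b1" and "odd b2" and "e0 < b1" and "b2 = b1 + 2 * e0"
  shows "\<forall>a::int. odd a \<longrightarrow>
     (\<exists>\<alpha> \<rho>. \<alpha> \<noteq> 0 \<and> \<rho> \<noteq> 0 \<and> v2 \<alpha> = a \<and> v2 \<rho> = a + (b2 - b1) \<and>
        (let \<mu> = \<sigma> \<alpha> + \<alpha> - \<rho> in (\<sigma> ^^ 2) \<mu> = \<mu> \<and> \<mu> \<noteq> 0 \<and> v2 \<mu> = a + b1)) \<and>
     (4 dvd (a + b1) \<longrightarrow>
       (\<exists>\<alpha> \<rho>. \<alpha> \<noteq> 0 \<and> \<rho> \<noteq> 0 \<and> v2 \<alpha> = a \<and> v2 \<rho> = a + (b2 - b1) \<and>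
        (let \<mu> = \<sigma> \<alpha> + \<alpha> - \<rho> in (\<sigma> ^^ 2) \<mu> = \<mu> \<and> \<mu> \<noteq> 0 \<and> v2 \<mu> = a + b1 \<and> \<sigma> \<mu> = \<mu>)))"
proof -
  have nd: "normalized_discrete_valuation v2" and fin: "finite (residue_field v2)"
    and two: "(2::'k) \<in> val_ideal v2"
    using local unfolding two_adic_local_field_def by auto
  interpret vfield v2
    by unfold_locales (use nd in \<open>auto simp: normalized_discrete_valuation_def\<close>)
  obtain \<pi> where pi: "\<pi> \<noteq> 0" "v2 \<pi> = 1" using nd unfolding normalized_discrete_valuation_def by blast
  have bij: "bij \<sigma>" and sadd: "\<And>x y. \<sigma> (x + y) = \<sigma> x + \<sigma> y" and smult: "\<And>x y. \<sigma> (x * y) = \<sigma> x * \<sigma> y"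
    using aut unfolding field_automorphism_def by auto
  have inj: "inj \<sigma>" using bij bij_is_inj by blast
  have s0: "\<sigma> 0 = 0" using sadd[of 0 0] by simp
  have s0': "\<sigma> x = 0 \<longleftrightarrow> x = 0" for x using inj s0 by (metis injD)
  have s4: "\<sigma> (\<sigma> (\<sigma> (\<sigma> x))) = x" for x
  proof -
    have "(\<sigma> ^^ 4) x = x" using ord4 by simp
    then show ?thesis by (simp add: eval_nat_numeral)
  qed
  have vs: "\<And>x. x \<noteq> 0 \<Longrightarrow> v2 (\<sigma> x) = v2 x" using val_inv by blast
  have BA: "(\<forall>x. ge x 0 \<longrightarrow> ge (\<sigma> x - x) (b1 + 1)) \<and> \<not> (\<forall>x. ge x 0 \<longrightarrow> ge (\<sigma> x - x) (b1 + 2))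
    \<and> (\<forall>x. ge x 0 \<longrightarrow> ge (\<sigma> (\<sigma> x) - x) (b2 + 1)) \<and> \<not> (\<forall>x. ge x 0 \<longrightarrow> ge (\<sigma> (\<sigma> x) - x) (b2 + 2))
    \<and> 1 \<le> b1"
    by (rule breaks_analysis[OF sadd s0' vs s4 breaks \<open>b1 < b2\<close>])
  have fixv: "4 dvd v2 x" if "x \<noteq> 0" "\<sigma> x = x" for x
  proof -
    have "v2 x \<in> {v2 x | x. x \<noteq> 0 \<and> \<sigma> x = x}" using that by blast
    then have "v2 x \<in> {4 * k | k. True}" using tot_ram by simp
    then show ?thesis by auto
  qed
  have fixex: "\<exists>c. c \<noteq> 0 \<and> \<sigma> c = c \<and> v2 c = 4 * k" for k
  proof -
    have "4 * k \<in> {4 * k | k. True}" by blast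
    then have "4 * k \<in> {v2 x | x. x \<noteq> 0 \<and> \<sigma> x = x}" using tot_ram by simp
    then show ?thesis by auto
  qed
  have ge21: "ge 2 1" using two unfolding val_ideal_def gev_def by simp
  have R1: "ge x 0 \<Longrightarrow> ge (\<sigma> x - x) (b1 + 1)" for x using BA by blast
  have nR1: "\<not> (\<forall>x. ge x 0 \<longrightarrow> ge (\<sigma> x - x) (b1 + 2))" using BA by blast
  have R2: "ge x 0 \<Longrightarrow> ge (\<sigma> (\<sigma> x) - x) (b2 + 1)" for x using BA by blast
  have nR2: "\<not> (\<forall>x. ge x 0 \<longrightarrow> ge (\<sigma> (\<sigma> x) - x) (b2 + 2))" using BA by blast
  have b1pos: "1 \<le> b1" using BA by blast
  have vf: "vfield v2" by (rule vfield_axioms)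
  interpret S: setting v2 \<sigma> \<pi> b1 b2 e0
    by (rule setting.intro[OF vf], rule setting_axioms.intro[OF sadd smult inj s4 vs fixv fixex pi(1) pi(2)
       fin e0_def ge21 R1 nR1 R2 nR2 \<open>odd b1\<close> \<open>e0 < b1\<close> \<open>b2 = b1 + 2 * e0\<close> b1pos])
  show ?thesis
  proof (intro allI impI conjI)
    fix a :: int assume a: "odd a"
    obtain \<alpha>0 where a0: "\<alpha>0 \<noteq> 0" "v2 \<alpha>0 = a" using S.exists_val by blast
    have sq: "(\<sigma> ^^ 2) x = \<sigma> (\<sigma> x)" for x by (simp add: numeral_2_eq_2)
    have diff: "b2 - b1 = 2 * e0" using assms by simp
    have P: "S.rho \<alpha> \<noteq> 0 \<and> v2 (S.rho \<alpha>) = a + 2 * e0 \<and> S.mu \<alpha> \<noteq> 0 \<and> v2 (S.mu \<alpha>) = a + b1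
       \<and> \<sigma> (\<sigma> (S.mu \<alpha>)) = S.mu \<alpha>" if "\<alpha> \<noteq> 0" "v2 \<alpha> = a" for \<alpha>
      using S.part1[of \<alpha>] that a by simp
    show "\<exists>\<alpha> \<rho>. \<alpha> \<noteq> 0 \<and> \<rho> \<noteq> 0 \<and> v2 \<alpha> = a \<and> v2 \<rho> = a + (b2 - b1) \<and>
        (let \<mu> = \<sigma> \<alpha> + \<alpha> - \<rho> in (\<sigma> ^^ 2) \<mu> = \<mu> \<and> \<mu> \<noteq> 0 \<and> v2 \<mu> = a + b1)"
    proof (rule exI[of _ \<alpha>0], rule exI[of _ "S.rho \<alpha>0"])
      have eq: "\<sigma> \<alpha>0 + \<alpha>0 - S.rho \<alpha>0 = S.mu \<alpha>0" by (simp add: S.mu_def)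
      show "\<alpha>0 \<noteq> 0 \<and> S.rho \<alpha>0 \<noteq> 0 \<and> v2 \<alpha>0 = a \<and> v2 (S.rho \<alpha>0) = a + (b2 - b1) \<and>
        (let \<mu> = \<sigma> \<alpha>0 + \<alpha>0 - S.rho \<alpha>0 in (\<sigma> ^^ 2) \<mu> = \<mu> \<and> \<mu> \<noteq> 0 \<and> v2 \<mu> = a + b1)"
        unfolding Let_def eq sq diff using P[OF a0] a0 by blast
    qed
    assume d4: "4 dvd (a + b1)"
    obtain \<alpha> where al: "\<alpha> \<noteq> 0" "v2 \<alpha> = a" "\<sigma> (S.mu \<alpha>) = S.mu \<alpha>"
      using S.part2[of \<alpha>0] a0 a d4 by auto
    show "\<exists>\<alpha> \<rho>. \<alpha> \<noteq> 0 \<and> \<rho> \<noteq> 0 \<and> v2 \<alpha> = a \<and> v2 \<rho> = a + (b2 - b1) \<and>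
        (let \<mu> = \<sigma> \<alpha> + \<alpha> - \<rho> in (\<sigma> ^^ 2) \<mu> = \<mu> \<and> \<mu> \<noteq> 0 \<and> v2 \<mu> = a + b1 \<and> \<sigma> \<mu> = \<mu>)"
    proof (rule exI[of _ \<alpha>], rule exI[of _ "S.rho \<alpha>"])
      have eq: "\<sigma> \<alpha> + \<alpha> - S.rho \<alpha> = S.mu \<alpha>" by (simp add: S.mu_def)
      show "\<alpha> \<noteq> 0 \<and> S.rho \<alpha> \<noteq> 0 \<and> v2 \<alpha> = a \<and> v2 (S.rho \<alpha>) = a + (b2 - b1) \<and>
        (let \<mu> = \<sigma> \<alpha> + \<alpha> - S.rho \<alpha> in (\<sigma> ^^ 2) \<mu> = \<mu> \<and> \<mu> \<noteq> 0 \<and> v2 \<mu> = a + b1 \<and> \<sigma> \<mu> = \<mu>)"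
        unfolding Let_def eq sq diff using P[OF al(1,2)] al by blast
    qed
  qed
qed

end
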